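(* Let $X$ be a correlator of type $X_{-1}$ and let $W_1=x_1^{a_1}x_2+x_2^{a_2}x_3+\dots+x_N^{a_N}$ be a chain summand with $K_{W_1}=1$. Then $K_N\le\ell_N$. If moreover $K_N\ge0$, then the sequence $\mathbf K=(K_1,\dots,K_N)$ is either a concatenation of blocks $(0)$ and $(-1,1)$ followed by a final entry $1$, or a concatenation of blocks $(0)$ and $(-1,1)$ together with exactly one block among $(-1,2)$, $(-2,3)$, $(1)$, followed by a final entry $0$.
   Context: $W=\bigoplus_jW_j$ is an invertible polynomial written as a disjoint sum of atomic summands (variables relabeled within each summand), $E_W$ its exponent matrix, $K_{W_1}=\sum_{i\in W_1}K_i$. A genus-zero correlator (B-model of $W^T$, or A-model of $(W,G_W)$ via Krawitz's map) is of type $X_{-1}$ if it has at least four insertions, has the form $\langle x_N,\dots,x_N,\dots,x_1,\dots,x_1,\alpha,\beta\rangle$ with $x_i$ appearing $\ell_i\ge0$ times and $\alpha=\prod x_i^{m_i}$, $\beta=\prod x_i^{n_i}$ monomials of the standard basis of $\mathrm{Jac}(W^T)$, and, with $b=E_W^{-1}(\ell+m+n+2\cdot\mathbf 1)$ and $K_i=\ell_i-b_i+1$, satisfies $K_i\in\mathbb Z$ and $\sum_iK_i=1$. For a chain summand, the standard basis of its transpose $x_1^{a_1}+x_1x_2^{a_2}+\dots+x_{N-1}x_N^{a_N}$ consists of $\prod x_i^{r_i}$ with $r_i\le a_i-1$ excluding $r_N=a_N-1,r_{N-1}=0,\dots,r_{N-2l}=a_{N-2l}-1,r_{N-2l-1}\ge1$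 ($l\ge0$). *)

theory Defs
  imports Main "HOL.Rat"
begin

text \<open>Atomic invertible polynomials (variables numbered 1..N within each summand):
  Fermat a      :  x_1^a
  Chain [a_1..a_N] :  x_1^{a_1} x_2 + x_2^{a_2} x_3 + ... + x_{N-1}^{a_{N-1}} x_N + x_N^{a_N}
  Loop  [a_1..a_N] :  x_1^{a_1} x_2 + ... + x_{N-1}^{a_{N-1}} x_N + x_N^{a_N} x_1\<close>

datatype atomic = Fermat nat | Chain "nat list" | Loop "nat list"

fun asize :: "atomic \<Rightarrow> nat" where
  "asize (Fermat a) = 1"
| "asize (Chain as) = length as"
| "asize (Loop as) = length as"

fun valid_atomic :: "atomic \<Rightarrow> bool" where
  "valid_atomic (Fermat a) = (a \<ge> 2)"
| "valid_atomic (Chain as) = (as \<noteq> [] \<and> (\<forall>a\<in>set as. a \<ge> 2))"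
| "valid_atomic (Loop as) = (length as \<ge> 2 \<and> (\<forall>a\<in>set as. a \<ge> 2))"

text \<open>Exponent matrix of an atomic summand: entry (i,k) is the exponent of x_k
  in the i-th monomial (1-based).\<close>
fun aexp :: "atomic \<Rightarrow> nat \<Rightarrow> nat \<Rightarrow> nat" where
  "aexp (Fermat a) i k = (if i = 1 \<and> k = 1 then a else 0)"
| "aexp (Chain as) i k =
     (if k = i then as ! (i - 1) else if k = i + 1 then 1 else 0)"
| "aexp (Loop as) i k =
     (if k = i then as ! (i - 1) else if k = i mod length as + 1 then 1 else 0)"

text \<open>Standard basis of Jac(W_j^T) for an atomic summand W_j; a monomial
  prod x_i^{r_i} is given by its exponent function r (1-based).\<close>
fun in_std_basis :: "atomic \<Rightarrow> (nat \<Rightarrow> nat) \<Rightarrow> bool" where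
  "in_std_basis (Fermat a) r = (r 1 \<le> a - 2)"
| "in_std_basis (Loop as) r = (\<forall>i\<in>{1..length as}. r i \<le> as ! (i - 1) - 1)"
| "in_std_basis (Chain as) r =
     (let N = length as in
      (\<forall>i\<in>{1..N}. r i \<le> as ! (i - 1) - 1) \<and>
      \<not> (\<exists>l. 2 * l + 1 \<le> N \<and>
             (\<forall>k\<le>l. r (N - 2 * k) = as ! (N - 2 * k - 1) - 1) \<and>
             (\<forall>k<l. r (N - 2 * k - 1) = 0) \<and>
             (N - 2 * l - 1 = 0 \<or> r (N - 2 * l - 1) \<ge> 1)))"

text \<open>An invertible polynomial W = W_0 + ... + W_{k-1} (disjoint sum of atomic
  summands) is a list of atomic summands; variable (j,i) is the i-th variable of W_j.\<close>
type_synonym invpoly = "atomic list"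

definition valid_invpoly :: "invpoly \<Rightarrow> bool" where
  "valid_invpoly W = (\<forall>j<length W. valid_atomic (W ! j))"

definition vars :: "invpoly \<Rightarrow> (nat \<times> nat) set" where
  "vars W = {(j, i). j < length W \<and> 1 \<le> i \<and> i \<le> asize (W ! j)}"

definition expmat :: "invpoly \<Rightarrow> nat \<times> nat \<Rightarrow> nat \<times> nat \<Rightarrow> nat" where
  "expmat W u w = (if fst u = fst w then aexp (W ! fst u) (snd u) (snd w) else 0)"

definition expmat_inv_apply :: "invpoly \<Rightarrow> (nat \<times> nat \<Rightarrow> rat) \<Rightarrow> (nat \<times> nat \<Rightarrow> rat)" where
  "expmat_inv_apply W v = (THE b.
      (\<forall>u\<in>vars W. (\<Sum>w\<in>vars W. of_nat (expmat W u w) * b w) = v u) \<and>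
      (\<forall>u. u \<notin> vars W \<longrightarrow> b u = 0))"

definition bvec :: "invpoly \<Rightarrow> (nat \<times> nat \<Rightarrow> nat) \<Rightarrow> (nat \<times> nat \<Rightarrow> nat) \<Rightarrow> (nat \<times> nat \<Rightarrow> nat) \<Rightarrow> nat \<times> nat \<Rightarrow> rat" where
  "bvec W l m n = expmat_inv_apply W (\<lambda>u. of_nat (l u + m u + n u + 2))"

definition Kvec :: "invpoly \<Rightarrow> (nat \<times> nat \<Rightarrow> nat) \<Rightarrow> (nat \<times> nat \<Rightarrow> nat) \<Rightarrow> (nat \<times> nat \<Rightarrow> nat) \<Rightarrow> nat \<times> nat \<Rightarrow> rat" where
  "Kvec W l m n u = of_nat (l u) - bvec W l m n u + 1"

text \<open>Correlator <x..x, alpha, beta> with x_u appearing l u times, alpha = prod x_u^{m u},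
  beta = prod x_u^{n u}, of type X_{-1}.\<close>
definition type_X_minus1 :: "invpoly \<Rightarrow> (nat \<times> nat \<Rightarrow> nat) \<Rightarrow> (nat \<times> nat \<Rightarrow> nat) \<Rightarrow> (nat \<times> nat \<Rightarrow> nat) \<Rightarrow> bool" where
  "type_X_minus1 W l m n =
     ((\<Sum>u\<in>vars W. l u) + 2 \<ge> 4 \<and>
      (\<forall>j<length W. in_std_basis (W ! j) (\<lambda>i. m (j, i))) \<and>
      (\<forall>j<length W. in_std_basis (W ! j) (\<lambda>i. n (j, i))) \<and>
      (\<forall>u\<in>vars W. Kvec W l m n u \<in> \<int>) \<and>
      (\<Sum>u\<in>vars W. Kvec W l m n u) = 1)"

definition basic_blocks :: "rat list set" where
  "basic_blocks = {[0], [-1, 1]}"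

definition special_blocks :: "rat list set" where
  "special_blocks = {[-1, 2], [-2, 3], [1]}"

end

theory Submission
  imports Defs
begin


fun rowval :: "atomic \<Rightarrow> (nat \<Rightarrow> rat) \<Rightarrow> nat \<Rightarrow> rat" where
  "rowval (Fermat a) f i = of_nat a * f 1"
| "rowval (Chain as) f i = of_nat (as!(i-1)) * f i + (if i < length as then f (Suc i) else 0)"
| "rowval (Loop as) f i = of_nat (as!(i-1)) * f i + f (i mod length as + 1)"

lemma atomic_row:
  assumes "valid_atomic A" "i \<in> {1..asize A}"
  shows "(\<Sum>k\<in>{1..asize A}. of_nat (aexp A i k) * f k) = rowval A f i"
proof (cases A)
  case (Fermat a)
  then show ?thesis using assms by auto
next
  case (Chain as)
  have "(\<Sum>k\<in>{1..asize A}. of_nat (aexp A i k) * f k) = (\<Sum>k\<in>{1..asize A}. (if k = i then of_nat (as!(i-1)) * f i else 0) + (if k = Suc i then f (Suc i) else 0))"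
    by (rule sum.cong) (auto simp: Chain)
  also have "\<dots> = rowval A f i" using assms Chain by (simp only: sum.distrib sum.delta finite_atLeastAtMost) auto
  finally show ?thesis .
next
  case (Loop as)
  let ?N = "length as"
  have N2: "?N \<ge> 2" using assms Loop by auto
  have ne: "i mod ?N + 1 \<noteq> i"
  proof (cases "i < ?N")
    case True then show ?thesis by simp
  next
    case False then have "i = ?N" using assms Loop by auto
    then show ?thesis using N2 by simp
  qed
  have "i mod ?N < ?N" using N2 by (intro mod_less_divisor) auto
  then have mem: "i mod ?N + 1 \<in> {1..?N}" by simp
  have "(\<Sum>k\<in>{1..asize A}. of_nat (aexp A i k) * f k) = (\<Sum>k\<in>{1..asize A}. (if k = i then of_nat (as!(i-1)) * f i else 0) + (if k = i mod ?N + 1 then f (i mod ?N + 1) else 0))"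
    by (rule sum.cong) (use ne in \<open>auto simp: Loop\<close>)
  also have "\<dots> = rowval A f i" using assms Loop mem by (simp only: sum.distrib sum.delta finite_atLeastAtMost) auto
  finally show ?thesis .
qed

fun cs :: "nat list \<Rightarrow> (nat \<Rightarrow> rat) \<Rightarrow> nat \<Rightarrow> rat" where
  "cs as v 0 = v (length as) / of_nat (as ! (length as - 1))"
| "cs as v (Suc d) = (v (length as - Suc d) - cs as v d) / of_nat (as ! (length as - Suc d - 1))"

primrec al :: "nat list \<Rightarrow> (nat \<Rightarrow> rat) \<Rightarrow> nat \<Rightarrow> rat" where
  "al as v 0 = 0"
| "al as v (Suc k) = v (Suc k) - of_nat (as!k) * al as v k"

primrec be :: "nat list \<Rightarrow> nat \<Rightarrow> rat" where
  "be as 0 = 1"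
| "be as (Suc k) = - of_nat (as!k) * be as k"

definition lt :: "nat list \<Rightarrow> (nat \<Rightarrow> rat) \<Rightarrow> rat" where
  "lt as v = (v (length as) - of_nat (as!(length as - 1)) * al as v (length as - 1))
      / (of_nat (as!(length as - 1)) * be as (length as - 1) + 1)"

fun sol :: "atomic \<Rightarrow> (nat \<Rightarrow> rat) \<Rightarrow> nat \<Rightarrow> rat" where
  "sol (Fermat a) v i = v 1 / of_nat a"
| "sol (Chain as) v i = cs as v (length as - i)"
| "sol (Loop as) v i = al as v (i-1) + be as (i-1) * lt as v"

lemma be_ge: "(\<forall>a\<in>set as. a \<ge> 2) \<Longrightarrow> k \<le> length as \<Longrightarrow> \<bar>be as k\<bar> \<ge> 1"
proof (induction k)
  case 0 then show ?case by simp
next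
  case (Suc k)
  then have a: "as!k \<ge> 2" by auto
  have a1: "(1::rat) \<le> of_nat (as!k)" using a by simp
  have "1 * 1 \<le> of_nat (as!k) * \<bar>be as k\<bar>" using Suc a1 by (intro mult_mono) auto
  also have "\<dots> = \<bar>be as (Suc k)\<bar>" by (simp add: abs_mult)
  finally show ?case by simp
qed

lemma sol_ok:
  assumes "valid_atomic A" "i \<in> {1..asize A}"
  shows "rowval A (sol A v) i = v i"
proof (cases A)
  case (Fermat a)
  then show ?thesis using assms by auto
next
  case (Chain as)
  let ?N = "length as"
  have ai: "as!(i-1) \<ge> 2" using assms Chain by auto
  show ?thesis
  proof (cases "i < ?N")
    case True
    have e: "?N - i = Suc (?N - Suc i)" using True by simp
    have e2: "?N - Suc (?N - Suc i) = i" using True by simp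
    show ?thesis using True ai unfolding Chain by (simp add: e e2)
  next
    case False then have "i = ?N" using assms Chain by auto
    then show ?thesis using ai Chain by simp
  qed
next
  case (Loop as)
  let ?N = "length as"
  have N2: "?N \<ge> 2" using assms Loop by auto
  have ai: "as!(i-1) \<ge> 2" using assms Loop by auto
  show ?thesis
  proof (cases "i < ?N")
    case True
    have i1: "Suc (i-1) = i" using assms Loop by auto
    have "be as (Suc (i-1)) = - of_nat (as!(i-1)) * be as (i-1)" "al as v (Suc (i-1)) = v (Suc (i-1)) - of_nat (as!(i-1)) * al as v (i-1)"
      by simp_all
    then have "be as i = - of_nat (as!(i-1)) * be as (i-1)" "al as v i = v i - of_nat (as!(i-1)) * al as v (i-1)"
      unfolding i1 .
    then show ?thesis using True Loop by (simp add: algebra_simps)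
  next
    case False then have iN: "i = ?N" using assms Loop by auto
    have aN: "as!(?N-1) \<ge> 2" using ai iN by simp
    have "\<bar>be as (?N-1)\<bar> \<ge> 1" using be_ge assms Loop by auto
    then have "\<bar>of_nat (as!(?N-1)) * be as (?N-1)\<bar> \<ge> 2" using aN
    proof -
      have "(2::rat) * 1 \<le> of_nat (as!(?N-1)) * \<bar>be as (?N-1)\<bar>"
        using aN \<open>\<bar>be as (?N-1)\<bar> \<ge> 1\<close> by (intro mult_mono) auto
      then show ?thesis by (simp add: abs_mult)
    qed
    then have nz: "of_nat (as!(?N-1)) * be as (?N-1) + 1 \<noteq> (0::rat)" by auto
    have "of_nat (as!(?N-1)) * (al as v (?N-1) + be as (?N-1) * lt as v) + lt as v
        = of_nat (as!(?N-1)) * al as v (?N-1) + (of_nat (as!(?N-1)) * be as (?N-1) + 1) * lt as v"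
      by (simp add: algebra_simps)
    also have "\<dots> = v ?N" using nz unfolding lt_def by simp
    finally show ?thesis using iN Loop N2 by simp
  qed
qed

lemma row_zero:
  assumes "valid_atomic A" "i \<in> {1..asize A}" "\<forall>k\<in>{1..asize A}. \<bar>f k\<bar> \<le> \<bar>f i\<bar>" "rowval A f i = 0"
  shows "f i = 0"
proof -
  obtain a e where ae: "rowval A f i = of_nat a * f i + e" "a \<ge> 2" "\<bar>e\<bar> \<le> \<bar>f i\<bar>"
  proof (cases A)
    case (Fermat a)
    then show ?thesis using that[of a 0] assms by auto
  next
    case (Chain as)
    then show ?thesis using that[of "as!(i-1)" "if i < length as then f (Suc i) else 0"] assms by auto
  next
    case (Loop as)
    have N2: "length as \<ge> 2" using assms Loop by auto
    have "i mod length as < length as" using N2 by (intro mod_less_divisor) auto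
    then have "i mod length as + 1 \<in> {1..length as}" by simp
    then show ?thesis using that[of "as!(i-1)" "f (i mod length as + 1)"] assms Loop by auto
  qed
  have "\<bar>of_nat a * f i\<bar> = \<bar>e\<bar>" using ae assms(4) by (simp add: add_eq_0_iff2)
  then have "of_nat a * \<bar>f i\<bar> \<le> \<bar>f i\<bar>" using ae by (simp add: abs_mult)
  moreover have "2 * \<bar>f i\<bar> \<le> of_nat a * \<bar>f i\<bar>" using ae by (intro mult_right_mono) auto
  ultimately show ?thesis by simp
qed

lemma vars_eq: "vars W = (SIGMA j:{..<length W}. {1..asize (W!j)})"
  by (auto simp: vars_def)

lemma finite_vars: "finite (vars W)"
  unfolding vars_eq by auto

lemma global_row:
  assumes "(j,i) \<in> vars W"
  shows "(\<Sum>w\<in>vars W. of_nat (expmat W (j,i) w) * (c w::rat))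
       = (\<Sum>k\<in>{1..asize (W!j)}. of_nat (aexp (W!j) i k) * c (j,k))"
proof -
  have j: "j < length W" using assms by (auto simp: vars_def)
  have "(\<Sum>w\<in>vars W. of_nat (expmat W (j,i) w) * c w)
      = (\<Sum>w\<in>vars W. if fst w = j then of_nat (aexp (W!j) i (snd w)) * c w else 0)"
    by (rule sum.cong) (auto simp: expmat_def)
  also have "\<dots> = (\<Sum>w\<in>{w\<in>vars W. fst w = j}. of_nat (aexp (W!j) i (snd w)) * c w)"
    using finite_vars by (simp add: sum.inter_filter)
  also have "{w\<in>vars W. fst w = j} = Pair j ` {1..asize (W!j)}"
    using j by (auto simp: vars_def)
  also have "(\<Sum>w\<in>Pair j ` {1..asize (W!j)}. of_nat (aexp (W!j) i (snd w)) * c w)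
     = (\<Sum>k\<in>{1..asize (W!j)}. of_nat (aexp (W!j) i k) * c (j,k))"
    by (subst sum.reindex) (auto simp: inj_on_def)
  finally show ?thesis .
qed

lemma system_unique:
  fixes v :: "nat \<times> nat \<Rightarrow> rat"
  assumes "valid_invpoly W"
  shows "\<exists>!b. (\<forall>u\<in>vars W. (\<Sum>w\<in>vars W. of_nat (expmat W u w) * b w) = v u) \<and>
      (\<forall>u. u \<notin> vars W \<longrightarrow> b u = 0)"
proof (rule ex_ex1I)
  define b where "b u = (if u \<in> vars W then sol (W ! fst u) (\<lambda>i. v (fst u, i)) (snd u) else 0)" for u
  show "\<exists>b. (\<forall>u\<in>vars W. (\<Sum>w\<in>vars W. of_nat (expmat W u w) * b w) = v u) \<and>
      (\<forall>u. u \<notin> vars W \<longrightarrow> b u = 0)"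
  proof (intro exI[of _ b] conjI ballI allI impI)
    fix u assume u: "u \<in> vars W"
    obtain j i where ji: "u = (j,i)" by force
    have j: "j < length W" and i: "i \<in> {1..asize (W!j)}" using u ji by (auto simp: vars_def)
    have va: "valid_atomic (W!j)" using assms j by (auto simp: valid_invpoly_def)
    have "(\<Sum>w\<in>vars W. of_nat (expmat W u w) * b w) = (\<Sum>k\<in>{1..asize (W!j)}. of_nat (aexp (W!j) i k) * b (j,k))"
      using global_row u ji by simp
    also have "\<dots> = (\<Sum>k\<in>{1..asize (W!j)}. of_nat (aexp (W!j) i k) * sol (W!j) (\<lambda>i. v (j, i)) k)"
      by (rule sum.cong) (use j in \<open>auto simp: b_def vars_def\<close>)
    also have "\<dots> = v u" using atomic_row[OF va i] sol_ok[OF va i] ji by simp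
    finally show "(\<Sum>w\<in>vars W. of_nat (expmat W u w) * b w) = v u" .
  next
    fix u assume "u \<notin> vars W" then show "b u = 0" by (simp add: b_def)
  qed
next
  fix b1 b2
  assume h1: "(\<forall>u\<in>vars W. (\<Sum>w\<in>vars W. of_nat (expmat W u w) * b1 w) = v u) \<and> (\<forall>u. u \<notin> vars W \<longrightarrow> b1 u = 0)"
     and h2: "(\<forall>u\<in>vars W. (\<Sum>w\<in>vars W. of_nat (expmat W u w) * b2 w) = v u) \<and> (\<forall>u. u \<notin> vars W \<longrightarrow> b2 u = 0)"
  define c where "c u = b1 u - b2 u" for u
  have hc: "\<forall>u\<in>vars W. (\<Sum>w\<in>vars W. of_nat (expmat W u w) * c w) = 0"
  proof
    fix u assume u: "u \<in> vars W"
    have "(\<Sum>w\<in>vars W. of_nat (expmat W u w) * c w) = (\<Sum>w\<in>vars W. of_nat (expmat W u w) * b1 w) - (\<Sum>w\<in>vars W. of_nat (expmat W u w) * b2 w)"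
      unfolding c_def right_diff_distrib by (rule sum_subtractf)
    also have "\<dots> = 0" using conjunct1[OF h1] conjunct1[OF h2] u by simp
    finally show "(\<Sum>w\<in>vars W. of_nat (expmat W u w) * c w) = 0" .
  qed
  have allz: "\<forall>w\<in>vars W. c w = 0"
  proof (cases "vars W = {}")
    case True then show ?thesis by simp
  next
    case False
    define M where "M = Max ((\<lambda>u. \<bar>c u\<bar>) ` vars W)"
    have "M \<in> (\<lambda>u. \<bar>c u\<bar>) ` vars W" unfolding M_def using False finite_vars by (intro Max_in) auto
    then obtain u where u: "u \<in> vars W" "\<bar>c u\<bar> = M" by auto
    have Mge: "\<bar>c w\<bar> \<le> M" if "w \<in> vars W" for w unfolding M_def using that finite_vars by (intro Max_ge) auto
    obtain j i where ji: "u = (j,i)" by force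
    have j: "j < length W" and i: "i \<in> {1..asize (W!j)}" using u ji by (auto simp: vars_def)
    have va: "valid_atomic (W!j)" using assms j by (auto simp: valid_invpoly_def)
    have uji: "(j,i) \<in> vars W" using u ji by simp
    have "(\<Sum>w\<in>vars W. of_nat (expmat W (j,i) w) * c w) = 0" using hc uji by blast
    then have "(\<Sum>k\<in>{1..asize (W!j)}. of_nat (aexp (W!j) i k) * c (j,k)) = 0"
      using global_row[of j i W c, OF uji] by simp
    then have "rowval (W!j) (\<lambda>k. c (j,k)) i = 0"
      using atomic_row[OF va i, of "\<lambda>k. c (j,k)"] by simp
    moreover have "\<forall>k\<in>{1..asize (W!j)}. \<bar>c (j,k)\<bar> \<le> \<bar>c (j,i)\<bar>"
    proof
      fix k assume "k \<in> {1..asize (W!j)}"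
      then have "(j,k) \<in> vars W" using j by (simp add: vars_def)
      then have "\<bar>c (j,k)\<bar> \<le> M" by (rule Mge)
      then show "\<bar>c (j,k)\<bar> \<le> \<bar>c (j,i)\<bar>" using u(2) ji by simp
    qed
    ultimately have "c (j,i) = 0" using row_zero[OF va i, of "\<lambda>k. c (j,k)"] by simp
    then have "M = 0" using u ji by simp
    then show ?thesis using Mge by fastforce
  qed
  show "b1 = b2"
  proof
    fix u show "b1 u = b2 u"
    proof (cases "u \<in> vars W")
      case True with allz show ?thesis by (simp add: c_def)
    next
      case False
      have "b1 u = 0" using conjunct2[OF h1] False by blast
      moreover have "b2 u = 0" using conjunct2[OF h2] False by blast
      ultimately
      show ?thesis by simp
    qed
  qed
qed



definition F0 :: "rat list \<Rightarrow> bool" where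
  "F0 xs = (\<exists>bs. set bs \<subseteq> basic_blocks \<and> xs = concat bs @ [0])"

definition F1 :: "rat list \<Rightarrow> bool" where
  "F1 xs = ((\<exists>bs. set bs \<subseteq> basic_blocks \<and> xs = concat bs @ [1]) \<or>
          (\<exists>bs1 s bs2. set bs1 \<subseteq> basic_blocks \<and> set bs2 \<subseteq> basic_blocks \<and>
                s \<in> special_blocks \<and> xs = concat bs1 @ s @ concat bs2 @ [0]))"

lemma F0_base: "F0 [0]"
  unfolding F0_def by (intro exI[of _ "[]"]) simp

lemma F1_base: "F1 [1]"
  unfolding F1_def by (intro disjI1 exI[of _ "[]"]) simp

lemma F0_0: "F0 xs \<Longrightarrow> F0 (0 # xs)"
  unfolding F0_def basic_blocks_def
  by (elim exE conjE, rule_tac x="[0] # bs" in exI) auto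

lemma F0_m11: "F0 xs \<Longrightarrow> F0 ((-1) # 1 # xs)"
  unfolding F0_def basic_blocks_def
  by (elim exE conjE, rule_tac x="[-1,1] # bs" in exI) auto

lemma F1_0: "F1 xs \<Longrightarrow> F1 (0 # xs)"
  unfolding F1_def basic_blocks_def
  apply (elim disjE exE conjE)
   apply (rule disjI1, rule_tac x="[0] # bs" in exI, simp)
  apply (rule disjI2, rule_tac x="[0] # bs1" in exI, auto)
  done

lemma F1_m11: "F1 xs \<Longrightarrow> F1 ((-1) # 1 # xs)"
  unfolding F1_def basic_blocks_def
  apply (elim disjE exE conjE)
   apply (rule disjI1, rule_tac x="[-1,1] # bs" in exI, simp)
  apply (rule disjI2, rule_tac x="[-1,1] # bs1" in exI, auto)
  done

lemma F1_1: "F0 xs \<Longrightarrow> F1 (1 # xs)"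
  unfolding F1_def F0_def special_blocks_def
  by (elim exE conjE) (rule disjI2, rule_tac x="[]" in exI, rule_tac x="[1]" in exI, rule_tac x=bs in exI, auto)

lemma F1_m12: "F0 xs \<Longrightarrow> F1 ((-1) # 2 # xs)"
  unfolding F1_def F0_def special_blocks_def
  by (elim exE conjE) (rule disjI2, rule_tac x="[]" in exI, rule_tac x="[-1,2]" in exI, rule_tac x=bs in exI, auto)

lemma comb:
  fixes N :: nat and a b K :: "nat \<Rightarrow> int"
  assumes N: "N \<ge> 1"
    and a2: "\<forall>i\<in>{1..N}. a i \<ge> 2"
    and b0: "b (Suc N) = 0"
    and HA: "\<forall>i\<in>{1..N}. K i + b i \<ge> 1"
    and HC: "\<forall>i\<in>{1..N}. K i + 1 \<le> (a i - 1) * b i + b (Suc i)"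
    and HB: "\<forall>i\<in>{1..N}. (a i - 1) * b i + b (Suc i) \<le> K i + 2 * a i - 1"
    and KN: "K N \<ge> 0"
    and sum1: "(\<Sum>i=1..N. K i) = 1"
  shows "F1 (map (\<lambda>i. of_int (K i) :: rat) [1..<N+1])"
proof -
  have HAi: "K i + b i \<ge> 1" if "i\<in>{1..N}" for i using HA that by blast
  have LB: "K i \<ge> b i + b (Suc i) - 3" if "i \<in> {1..N}" "b i \<ge> 2" for i
  proof -
    have ai: "a i \<ge> 2" using a2 that by auto
    have "(a i - 1) * (b i - 2) \<ge> 1 * (b i - 2)"
      using ai that by (intro mult_right_mono) auto
    then have "(a i - 1) * (b i - 2) \<ge> b i - 2" by simp
    moreover have "(a i - 1) * (b i - 2) = (a i - 1) * b i - 2 * a i + 2" by (simp add: algebra_simps)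
    moreover have "(a i - 1) * b i + b (Suc i) \<le> K i + 2 * a i - 1" using HB that by auto
    ultimately show ?thesis by linarith
  qed
  have UB: "K i + 1 - b i \<le> b (Suc i)" if "i \<in> {1..N}" "b i \<le> 0" for i
  proof -
    have ai: "a i \<ge> 2" using a2 that by auto
    have "(a i - 1) * b i \<le> 1 * b i"
      using ai that by (intro mult_right_mono_neg) auto
    then have "(a i - 1) * b i \<le> b i" by simp
    moreover have "K i + 1 \<le> (a i - 1) * b i + b (Suc i)" using HC that by auto
    ultimately show ?thesis by linarith
  qed
  have bN: "b N \<ge> 1"
  proof (rule ccontr)
    assume "\<not> b N \<ge> 1"
    then have "b N \<le> 0" by simp
    moreover have "a N \<ge> 2" using a2 N by auto
    ultimately have "(a N - 1) * b N \<le> 0" by (intro mult_nonneg_nonpos) auto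
    then show False using HC KN N b0 by force
  qed
  define T where "T p = (\<Sum>i=p..N. K i)" for p
  define L where "L p = map (\<lambda>i. of_int (K i) :: rat) [p..<N+1]" for p
  have Tstep: "T p = K p + T (Suc p)" if "p \<le> N" for p
    unfolding T_def using that by (rule sum.atLeast_Suc_atMost)
  have TN: "T N = K N" unfolding T_def by simp
  have TSN: "T (Suc N) = 0" unfolding T_def by simp
  have Lstep: "L p = of_int (K p) # L (Suc p)" if "p \<le> N" for p
  proof -
    have "[p..<N+1] = p # [Suc p..<N+1]" by (rule upt_conv_Cons) (use that in simp)
    then show ?thesis unfolding L_def by (simp only: list.map)
  qed
  have LN: "L N = [of_int (K N)]" unfolding L_def by simp
  have Tlow: "T p \<ge> 0 \<and> T p \<ge> 1 - b p \<and> T p \<ge> b p - 3" if "1 \<le> p" "p \<le> N" for p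
    using that
  proof (induction "N - p" arbitrary: p rule: less_induct)
    case less
    show ?case
    proof (cases "p = N")
      case True
      have "K N \<ge> 1 - b N" using HAi[of N] N by auto
      moreover have "K N \<ge> b N - 3"
      proof (cases "b N \<ge> 2")
        case True then show ?thesis using LB[of N] N b0 by auto
      next
        case False then show ?thesis using KN by auto
      qed
      ultimately show ?thesis using True TN KN by auto
    next
      case False
      then have pl: "p < N" using less by auto
      have IH: "T (Suc p) \<ge> 0 \<and> T (Suc p) \<ge> 1 - b (Suc p) \<and> T (Suc p) \<ge> b (Suc p) - 3"
        using less.hyps[of "Suc p"] pl by auto
      have pi: "p \<in> {1..N}" using less by auto
      have "K p \<ge> 1 - b p" using HAi[OF pi] by auto
      moreover have "b p \<ge> 2 \<Longrightarrow> K p \<ge> b p + b (Suc p) - 3" using LB pi by auto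
      ultimately show ?thesis using IH Tstep[of p] pl by force
    qed
  qed
  have KN1: "K p \<ge> 0" if "p = N - 1" "N \<ge> 2" for p
  proof -
    have pi: "p \<in> {1..N}" and sp: "Suc p = N" using that by auto
    have "K p \<ge> 1 - b p" using HAi[OF pi] by auto
    moreover have "b p \<ge> 2 \<Longrightarrow> K p \<ge> b p + b (Suc p) - 3" using LB pi by auto
    ultimately show ?thesis using bN sp by force
  qed
  have main: "(T p = 0 \<longrightarrow> F0 (L p)) \<and> (T p = 1 \<longrightarrow> F1 (L p))" if "1 \<le> p" "p \<le> N" for p
    using that
  proof (induction "N - p" arbitrary: p rule: less_induct)
    case less
    show ?case
    proof (cases "p = N")
      case True
      then show ?thesis using LN TN F0_base F1_base by auto
    next
      case False
      then have pl: "p < N" using less by auto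
      have pi: "p \<in> {1..N}" using less by auto
      have IH1: "(T (Suc p) = 0 \<longrightarrow> F0 (L (Suc p))) \<and> (T (Suc p) = 1 \<longrightarrow> F1 (L (Suc p)))"
        using less.hyps[of "Suc p"] pl by auto
      have Ts: "T p = K p + T (Suc p)" using Tstep pl by simp
      have Tl1: "T (Suc p) \<ge> 0" using Tlow[of "Suc p"] pl by auto
      have Lp: "L p = of_int (K p) # L (Suc p)" using Lstep pl by simp
      show ?thesis
      proof (cases "K p \<ge> 0")
        case True
        show ?thesis
        proof (cases "K p = 0")
          case True
          then show ?thesis using Ts IH1 Lp F0_0 F1_0 by auto
        next
          case False
          show ?thesis
          proof (intro conjI impI)
            assume "T p = 0" then show "F0 (L p)" using Ts Tl1 \<open>K p \<ge> 0\<close> False by auto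
          next
            assume T1: "T p = 1"
            then have "K p = 1" "T (Suc p) = 0" using Ts Tl1 \<open>K p \<ge> 0\<close> False by auto
            then show "F1 (L p)" using Lp IH1 F1_1 by auto
          qed
        qed
      next
        case False
        then have Kneg: "K p < 0" by simp
        have pN: "Suc p \<noteq> N" using KN1[of p] Kneg pl less.prems by (cases "N \<ge> 2") auto
        then have pl2: "Suc (Suc p) \<le> N" using pl by auto
        have pi1: "Suc p \<in> {1..N}" using pl by auto
        have IH2: "(T (Suc (Suc p)) = 0 \<longrightarrow> F0 (L (Suc (Suc p)))) \<and> (T (Suc (Suc p)) = 1 \<longrightarrow> F1 (L (Suc (Suc p))))"
          using less.hyps[of "Suc (Suc p)"] pl2 by auto
        have Ts1: "T (Suc p) = K (Suc p) + T (Suc (Suc p))" using Tstep pl2 by simp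
        have Tl2: "T (Suc (Suc p)) \<ge> 0" "T (Suc (Suc p)) \<ge> b (Suc (Suc p)) - 3" using Tlow[of "Suc (Suc p)"] pl2 by auto
        have Lp1: "L (Suc p) = of_int (K (Suc p)) # L (Suc (Suc p))" using Lstep pl2 by simp
        have hA: "K p + b p \<ge> 1" using HAi[OF pi] by auto
        then have bp: "b p \<ge> 2" using Kneg by auto
        have hL: "K p \<ge> b p + b (Suc p) - 3" using LB pi bp by auto
        have hA1: "K (Suc p) + b (Suc p) \<ge> 1" using HAi[OF pi1] by auto
        have bp1: "b (Suc p) \<le> 0" using hA hL Kneg by auto
        have hU: "K (Suc p) + 1 - b (Suc p) \<le> b (Suc (Suc p))" using UB pi1 bp1 by auto
        show ?thesis
        proof (intro conjI impI)
          assume "T p = 0"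
          then show "F0 (L p)"
          proof -
            assume T0: "T p = 0"
            have "K p = -1" using T0 Ts Ts1 Tl2 hA hL hA1 hU Kneg by auto
            moreover have "K (Suc p) = 1" "T (Suc (Suc p)) = 0"
              using T0 Ts Ts1 Tl2 hA hL hA1 hU Kneg \<open>K p = -1\<close> by auto
            ultimately show ?thesis using Lp Lp1 IH2 F0_m11 by auto
          qed
        next
          assume T1: "T p = 1"
          have Km: "K p = -1" using T1 Ts Ts1 Tl2 hA hL hA1 hU Kneg by auto
          have "K (Suc p) = 1 \<and> T (Suc (Suc p)) = 1 \<or> K (Suc p) = 2 \<and> T (Suc (Suc p)) = 0"
            using T1 Ts Ts1 Tl2 hA hL hA1 hU Km by auto
          then show "F1 (L p)"
          proof
            assume "K (Suc p) = 1 \<and> T (Suc (Suc p)) = 1"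
            then show ?thesis using Lp Lp1 IH2 F1_m11 Km by auto
          next
            assume "K (Suc p) = 2 \<and> T (Suc (Suc p)) = 0"
            then show ?thesis using Lp Lp1 IH2 F1_m12 Km by auto
          qed
        qed
      qed
    qed
  qed
  have "T 1 = 1" using sum1 unfolding T_def by simp
  then show ?thesis using main[of 1] N unfolding L_def by auto
qed



theorem lemma6p13:
  fixes W :: invpoly and l m n :: "nat \<times> nat \<Rightarrow> nat"
    and j :: nat and as :: "nat list"
  assumes "valid_invpoly W"
    and "type_X_minus1 W l m n"
    and "j < length W" and "W ! j = Chain as"
    and "(\<Sum>i=1..length as. Kvec W l m n (j, i)) = 1"
  shows "Kvec W l m n (j, length as) \<le> of_nat (l (j, length as))
     \<and> (Kvec W l m n (j, length as) \<ge> 0 \<longrightarrow>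
         (let Ks = map (\<lambda>i. Kvec W l m n (j, i)) [1..<length as + 1] in
          (\<exists>bs. set bs \<subseteq> basic_blocks \<and> Ks = concat bs @ [1]) \<or>
          (\<exists>bs1 s bs2. set bs1 \<subseteq> basic_blocks \<and> set bs2 \<subseteq> basic_blocks \<and>
                s \<in> special_blocks \<and> Ks = concat bs1 @ s @ concat bs2 @ [0])))"
proof -
  note valid = assms(1) and tX = assms(2) and jl = assms(3) and Wj = assms(4) and sumK = assms(5)
  define N where "N = length as"
  have va: "valid_atomic (W!j)" using valid jl by (auto simp: valid_invpoly_def)
  then have asne: "as \<noteq> []" and as2: "\<forall>x\<in>set as. x \<ge> 2" using Wj by auto
  have N1: "N \<ge> 1" using asne N_def by (cases as) auto
  have asN: "asize (W!j) = N" using Wj N_def by simp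
  have aI: "as!(i-1) \<ge> 2" if "i \<in> {1..N}" for i
    using as2 that N_def by (auto intro!: as2[rule_format] nth_mem)
  define v where "v u = (of_nat (l u + m u + n u + 2) :: rat)" for u
  define bv where "bv = bvec W l m n"
  have bvdef: "bv = (THE b. (\<forall>u\<in>vars W. (\<Sum>w\<in>vars W. of_nat (expmat W u w) * b w) = v u) \<and>
      (\<forall>u. u \<notin> vars W \<longrightarrow> b u = 0))"
    unfolding bv_def bvec_def expmat_inv_apply_def v_def ..
  have bvsys: "\<forall>u\<in>vars W. (\<Sum>w\<in>vars W. of_nat (expmat W u w) * bv w) = v u"
    using theI'[OF system_unique[OF valid, of v]] unfolding bvdef by blast
  have inv: "(j,i) \<in> vars W" if "i \<in> {1..N}" for i
    using that jl asN by (auto simp: vars_def)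
  have roweq: "of_nat (as!(i-1)) * bv (j,i) + (if i < N then bv (j, Suc i) else 0) = v (j,i)"
    if "i \<in> {1..N}" for i
  proof -
    have "v (j,i) = (\<Sum>w\<in>vars W. of_nat (expmat W (j,i) w) * bv w)" using bvsys inv[OF that] by simp
    also have "\<dots> = (\<Sum>k\<in>{1..asize (W!j)}. of_nat (aexp (W!j) i k) * bv (j,k))"
      by (rule global_row[OF inv[OF that]])
    also have "\<dots> = rowval (W!j) (\<lambda>k. bv (j,k)) i"
      using atomic_row[OF va, of i "\<lambda>k. bv (j,k)"] that asN by simp
    finally show ?thesis using Wj N_def by simp
  qed
  have Kint: "\<forall>i\<in>{1..N}. \<exists>z::int. Kvec W l m n (j,i) = of_int z"
  proof
    fix i assume "i \<in> {1..N}"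
    then have "Kvec W l m n (j,i) \<in> \<int>" using tX inv unfolding type_X_minus1_def by blast
    then show "\<exists>z::int. Kvec W l m n (j,i) = of_int z" by (elim Ints_cases) auto
  qed
  then obtain K :: "nat \<Rightarrow> int" where K: "\<forall>i\<in>{1..N}. Kvec W l m n (j,i) = of_int (K i)"
    by metis
  define b where "b i = (if i \<le> N then int (l (j,i)) + 1 - K i else 0)" for i
  define a where "a i = int (as!(i-1))" for i
  have bvb: "bv (j,i) = of_int (b i)" if "i \<in> {1..N}" for i
  proof -
    have "Kvec W l m n (j,i) = of_nat (l (j,i)) - bv (j,i) + 1"
      unfolding Kvec_def bv_def ..
    then show ?thesis using K that unfolding b_def by auto
  qed
  have eqi: "a i * b i + b (Suc i) = int (l (j,i)) + int (m (j,i)) + int (n (j,i)) + 2"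
    if "i \<in> {1..N}" for i
  proof -
    have "b (Suc i) = (if i < N then b (Suc i) else 0)" unfolding b_def by auto
    moreover have "(if i < N then bv (j, Suc i) else 0) = of_int (if i < N then b (Suc i) else 0)"
      using bvb[of "Suc i"] that by auto
    ultimately have "of_int (a i * b i + b (Suc i)) = (of_int (int (l (j,i)) + int (m (j,i)) + int (n (j,i)) + 2) :: rat)"
      using roweq[OF that] bvb[OF that] unfolding a_def v_def by simp
    then show ?thesis by (simp only: of_int_eq_iff)
  qed
  have mb: "m (j,i) \<le> as!(i-1) - 1" "n (j,i) \<le> as!(i-1) - 1" if "i \<in> {1..N}" for i
  proof -
    have "in_std_basis (W!j) (\<lambda>i. m (j,i))" "in_std_basis (W!j) (\<lambda>i. n (j,i))"
      using tX jl unfolding type_X_minus1_def by auto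
    then show "m (j,i) \<le> as!(i-1) - 1" "n (j,i) \<le> as!(i-1) - 1"
      using that Wj N_def by (auto simp: Let_def)
  qed
  have Kb: "K i + b i = int (l (j,i)) + 1" if "i \<in> {1..N}" for i using that unfolding b_def by auto
  have HA: "\<forall>i\<in>{1..N}. K i + b i \<ge> 1" using Kb by auto
  have HBC: "K i + 1 \<le> (a i - 1) * b i + b (Suc i) \<and> (a i - 1) * b i + b (Suc i) \<le> K i + 2 * a i - 1"
    if "i \<in> {1..N}" for i
  proof -
    have e: "(a i - 1) * b i = a i * b i - b i" by (simp add: algebra_simps)
    have a2: "a i \<ge> 2" using aI[OF that] unfolding a_def by simp
    have "int (m (j,i)) \<le> a i - 1" "int (n (j,i)) \<le> a i - 1"
      using mb[OF that] aI[OF that] unfolding a_def by auto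
    then show ?thesis using eqi[OF that] Kb[OF that] e by linarith
  qed
  have b0: "b (Suc N) = 0" unfolding b_def by simp
  have a2: "\<forall>i\<in>{1..N}. a i \<ge> 2" using aI unfolding a_def by auto
  have NN: "N \<in> {1..N}" using N1 by simp
  have KNdef: "Kvec W l m n (j, N) = of_int (K N)" using K NN by blast
  have bN: "b N \<ge> 1"
  proof (rule ccontr)
    assume "\<not> b N \<ge> 1"
    then have "b N \<le> 0" by simp
    moreover have "a N \<ge> 2" using a2 NN by blast
    ultimately have "a N * b N \<le> 0" by (intro mult_nonneg_nonpos) auto
    then show False using eqi[OF NN] b0 by simp
  qed
  have part1: "Kvec W l m n (j, N) \<le> of_nat (l (j, N))"
  proof -
    have "K N \<le> int (l (j,N))" using Kb[OF NN] bN by simp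
    then have "(of_int (K N) :: rat) \<le> of_int (int (l (j,N)))" by (simp only: of_int_le_iff)
    then show ?thesis using KNdef by simp
  qed
  have sum1: "(\<Sum>i=1..N. K i) = 1"
  proof -
    have "(\<Sum>i=1..N. Kvec W l m n (j, i)) = (\<Sum>i=1..N. (of_int (K i) :: rat))"
      by (rule sum.cong) (use K in auto)
    then have "(of_int (\<Sum>i=1..N. K i) :: rat) = of_int 1" using sumK N_def by simp
    then show ?thesis by (simp only: of_int_eq_iff)
  qed
  have part2: "Kvec W l m n (j, N) \<ge> 0 \<Longrightarrow> F1 (map (\<lambda>i. Kvec W l m n (j, i)) [1..<N + 1])"
  proof -
    assume "Kvec W l m n (j, N) \<ge> 0"
    then have KN: "K N \<ge> 0" using KNdef by simp
    have "F1 (map (\<lambda>i. of_int (K i) :: rat) [1..<N+1])"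
      by (rule comb[OF N1 a2 b0 HA _ _ KN sum1]) (use HBC in auto)
    moreover have "map (\<lambda>i. Kvec W l m n (j, i)) [1..<N + 1] = map (\<lambda>i. of_int (K i) :: rat) [1..<N+1]"
      by (rule map_cong) (use K in auto)
    ultimately show ?thesis by (simp only:)
  qed
  show ?thesis using part1 part2 unfolding N_def F1_def Let_def by blast
qed


end
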